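(* Let $c,d\in\mathbb{N}$, $I=\mathbb{N}^d\times[c]$, $I_n=[n]^d\times[c]$, let $L\subseteq\mathbb{Z}^{(I)}$ be a lattice and $L_n=L\cap\mathbb{Z}^{(I_n)}$ for $n\ge1$. (i) If for every $n\ge1$, $\mathcal{B}_n\subseteq L_n$ is a generating set (respectively Markov basis, universal Gröbner basis, Graver basis) of $L_n$, then $\mathcal{B}=\bigcup_{n\ge1}\mathcal{B}_n$ is a generating set (respectively Markov basis, universal Gröbner basis, Graver basis) of $L$. Also, if $\prec$ is a term order on $\mathbb{Z}_{\ge0}^{(I)}$ and each $\mathcal{B}_n$ is a Gröbner basis of $L_n$ with respect to the restriction of $\prec$ to $\mathbb{Z}_{\ge0}^{(I_n)}$, then $\mathcal{B}$ is a Gröbner basis of $L$ with respect to $\prec$. (ii) If $\mathcal{G}$ is the Graver basis of $L$, then $\mathcal{G}\cap\mathbb{Z}^{(I_n)}$ is the Graver basis of $L_n$ for all $n\ge1$.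
   Context: $\mathbb{N}=\{1,2,\dots\}$. For a set $J$, $\mathbb{Z}^{(J)}$ is the free abelian group with basis $J$, $\mathbb{Z}_{\ge0}^{(J)}$ its nonnegative vectors; $\mathbb{Z}^{(I_n)}\subseteq\mathbb{Z}^{(I)}$ by extension by zero; a lattice is a subgroup. $\mathbf{u}\sqsubseteq\mathbf{v}$ iff $u_jv_j\ge0$ and $|u_j|\le|v_j|$ for all $j$. A term order is an additive well-ordering of $\mathbb{Z}_{\ge0}^{(J)}$. For a lattice $L\subseteq\mathbb{Z}^{(J)}$ and $\mathbf{u}\in\mathbb{Z}_{\ge0}^{(J)}$, $F_L(\mathbf{u})=\{\mathbf{v}\in\mathbb{Z}_{\ge0}^{(J)}\mid\mathbf{u}-\mathbf{v}\in L\}$. For $\mathcal{B}\subseteq L$: generating set = generates $L$ as a group; Markov basis = for every $\mathbf{u}$ the graph on $F_L(\mathbf{u})$ with edges $\{\mathbf{v},\mathbf{w}\}$ for $\mathbf{v}-\mathbf{w}\in\pm\mathcal{B}$ is connected; Gröbner basis w.r.t. $\prec$ = for every $\mathbf{u}$ there is a directed path from $\mathbf{u}$ to the $\prec$-minimal element of $F_L(\mathbf{u})$ in the graph on $F_L(\mathbf{u})$ with an edge from $\mathbf{v}$ to $\mathbf{w}$ whenever $\mathbf{v}-\mathbf{w}\in\pm\mathcal{B}$ and $\mathbf{w}\prec\mathbf{v}$; universal Gröbner basis = Gröbner basis w.r.t. every term order. The Graver basis is the set of $\sqsubseteq$-minimal elements of $L\setminus\{\mathbf{0}\}$. *)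

theory Defs
  imports Main "HOL-Library.Function_Algebras"
begin

text \<open>Vectors in Z^(J) are integer-valued functions on an ambient type 'j with finite
support contained in J.\<close>

definition supp :: "('j \<Rightarrow> int) \<Rightarrow> 'j set" where
  "supp u = {j. u j \<noteq> 0}"

definition ZJ :: "'j set \<Rightarrow> ('j \<Rightarrow> int) set" where
  "ZJ J = {u. finite (supp u) \<and> supp u \<subseteq> J}"

definition ZJ_nonneg :: "'j set \<Rightarrow> ('j \<Rightarrow> int) set" where
  "ZJ_nonneg J = {u \<in> ZJ J. \<forall>j. u j \<ge> 0}"

definition is_lattice :: "'j set \<Rightarrow> ('j \<Rightarrow> int) set \<Rightarrow> bool" where
  "is_lattice J L \<longleftrightarrow> L \<subseteq> ZJ J \<and> 0 \<in> L \<and> (\<forall>u\<in>L. \<forall>v\<in>L. u + v \<in> L) \<and> (\<forall>u\<in>L. - u \<in> L)"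

definition conformal :: "('j \<Rightarrow> int) \<Rightarrow> ('j \<Rightarrow> int) \<Rightarrow> bool" where
  "conformal u v \<longleftrightarrow> (\<forall>j. u j * v j \<ge> 0 \<and> \<bar>u j\<bar> \<le> \<bar>v j\<bar>)"

text \<open>Term order on Z_{\<ge>0}^(J), given as a strict relation: an additive well-ordering.\<close>
definition term_order :: "'j set \<Rightarrow> (('j \<Rightarrow> int) \<Rightarrow> ('j \<Rightarrow> int) \<Rightarrow> bool) \<Rightarrow> bool" where
  "term_order J ord \<longleftrightarrow>
     (\<forall>u\<in>ZJ_nonneg J. \<not> ord u u) \<and>
     (\<forall>u\<in>ZJ_nonneg J. \<forall>v\<in>ZJ_nonneg J. \<forall>w\<in>ZJ_nonneg J. ord u v \<longrightarrow> ord v w \<longrightarrow> ord u w) \<and>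
     (\<forall>u\<in>ZJ_nonneg J. \<forall>v\<in>ZJ_nonneg J. u \<noteq> v \<longrightarrow> ord u v \<or> ord v u) \<and>
     wf {(u, v). u \<in> ZJ_nonneg J \<and> v \<in> ZJ_nonneg J \<and> ord u v} \<and>
     (\<forall>u\<in>ZJ_nonneg J. \<forall>v\<in>ZJ_nonneg J. \<forall>w\<in>ZJ_nonneg J. ord u v \<longrightarrow> ord (u + w) (v + w))"

definition fiber :: "'j set \<Rightarrow> ('j \<Rightarrow> int) set \<Rightarrow> ('j \<Rightarrow> int) \<Rightarrow> ('j \<Rightarrow> int) set" where
  "fiber J L u = {v \<in> ZJ_nonneg J. u - v \<in> L}"

inductive_set gen_group :: "('j \<Rightarrow> int) set \<Rightarrow> ('j \<Rightarrow> int) set" for B where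
  zero: "0 \<in> gen_group B"
| add: "x \<in> gen_group B \<Longrightarrow> b \<in> B \<Longrightarrow> x + b \<in> gen_group B"
| sub: "x \<in> gen_group B \<Longrightarrow> b \<in> B \<Longrightarrow> x - b \<in> gen_group B"

definition generating_set :: "('j \<Rightarrow> int) set \<Rightarrow> ('j \<Rightarrow> int) set \<Rightarrow> bool" where
  "generating_set L B \<longleftrightarrow> B \<subseteq> L \<and> gen_group B = L"

definition markov_basis :: "'j set \<Rightarrow> ('j \<Rightarrow> int) set \<Rightarrow> ('j \<Rightarrow> int) set \<Rightarrow> bool" where
  "markov_basis J L B \<longleftrightarrow> B \<subseteq> L \<and>
     (\<forall>u\<in>ZJ_nonneg J. \<forall>v\<in>fiber J L u. \<forall>w\<in>fiber J L u.
        (v, w) \<in> {(x, y). x \<in> fiber J L u \<and> y \<in> fiber J L u \<and> (x - y \<in> B \<or> y - x \<in> B)}\<^sup>*)"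

definition groebner_basis :: "'j set \<Rightarrow> ('j \<Rightarrow> int) set \<Rightarrow> (('j \<Rightarrow> int) \<Rightarrow> ('j \<Rightarrow> int) \<Rightarrow> bool) \<Rightarrow> ('j \<Rightarrow> int) set \<Rightarrow> bool" where
  "groebner_basis J L ord B \<longleftrightarrow> B \<subseteq> L \<and>
     (\<forall>u\<in>ZJ_nonneg J. \<forall>m\<in>fiber J L u. (\<forall>v\<in>fiber J L u. \<not> ord v m) \<longrightarrow>
        (u, m) \<in> {(x, y). x \<in> fiber J L u \<and> y \<in> fiber J L u \<and> (x - y \<in> B \<or> y - x \<in> B) \<and> ord y x}\<^sup>*)"

definition universal_groebner_basis :: "'j set \<Rightarrow> ('j \<Rightarrow> int) set \<Rightarrow> ('j \<Rightarrow> int) set \<Rightarrow> bool" where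
  "universal_groebner_basis J L B \<longleftrightarrow> (\<forall>ord. term_order J ord \<longrightarrow> groebner_basis J L ord B)"

definition graver_basis :: "('j \<Rightarrow> int) set \<Rightarrow> ('j \<Rightarrow> int) set" where
  "graver_basis L = {g \<in> L. g \<noteq> 0 \<and> (\<forall>h\<in>L. h \<noteq> 0 \<longrightarrow> conformal h g \<longrightarrow> h = g)}"

text \<open>Index sets I = N^d \<times> [c] and I_n = [n]^d \<times> [c], with N^d as lists of length d.\<close>
definition idxI :: "nat \<Rightarrow> nat \<Rightarrow> (nat list \<times> nat) set" where
  "idxI d c = {(x, k). length x = d \<and> (\<forall>i\<in>set x. 1 \<le> i) \<and> 1 \<le> k \<and> k \<le> c}"

definition idxIn :: "nat \<Rightarrow> nat \<Rightarrow> nat \<Rightarrow> (nat list \<times> nat) set" where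
  "idxIn d c n = {(x, k). length x = d \<and> (\<forall>i\<in>set x. 1 \<le> i \<and> i \<le> n) \<and> 1 \<le> k \<and> k \<le> c}"

end

theory Submission
  imports Defs
begin

lemma ZJ_mono: "J \<subseteq> K \<Longrightarrow> ZJ J \<subseteq> ZJ K"
  unfolding ZJ_def by auto

lemma ZJ_nonneg_mono: "J \<subseteq> K \<Longrightarrow> ZJ_nonneg J \<subseteq> ZJ_nonneg K"
  unfolding ZJ_nonneg_def using ZJ_mono by blast

lemma ZJ_diff: assumes "u \<in> ZJ J" "v \<in> ZJ J" shows "u - v \<in> ZJ J"
proof -
  have "supp (u - v) \<subseteq> supp u \<union> supp v" unfolding supp_def by auto
  thus ?thesis using assms unfolding ZJ_def by (auto dest: finite_subset)
qed

lemma idxIn_sub: "idxIn d c n \<subseteq> idxI d c"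
  unfolding idxIn_def idxI_def by auto

lemma idxIn_mono: "n \<le> m \<Longrightarrow> idxIn d c n \<subseteq> idxIn d c m"
  unfolding idxIn_def by auto

lemma ZJn_mono: "n \<le> m \<Longrightarrow> ZJ (idxIn d c n) \<subseteq> ZJ (idxIn d c m)"
  using ZJ_mono[OF idxIn_mono] by blast

lemma exists_n: assumes "u \<in> ZJ (idxI d c)" shows "\<exists>n\<ge>1. u \<in> ZJ (idxIn d c n)"
proof -
  have fs: "finite (supp u)" and ss: "supp u \<subseteq> idxI d c" using assms unfolding ZJ_def by auto
  define S where "S = insert 1 (\<Union>((\<lambda>p. set (fst p)) ` supp u))"
  have fS: "finite S" unfolding S_def using fs by auto
  define N where "N = Max S"
  have N1: "N \<ge> 1" unfolding N_def using fS S_def by (simp add: Max_ge)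
  have "supp u \<subseteq> idxIn d c N"
  proof
    fix p assume p: "p \<in> supp u"
    obtain x k where pk: "p = (x,k)" by fastforce
    have "\<forall>i\<in>set x. i \<le> N"
    proof
      fix i assume "i \<in> set x"
      hence "i \<in> S" unfolding S_def using p pk by force
      thus "i \<le> N" unfolding N_def using fS by simp
    qed
    thus "p \<in> idxIn d c N" using ss p pk unfolding idxI_def idxIn_def by auto
  qed
  thus ?thesis using fs N1 unfolding ZJ_def by auto
qed

lemma exists_n2: assumes "u \<in> ZJ (idxI d c)" "v \<in> ZJ (idxI d c)"
  shows "\<exists>n\<ge>1. u \<in> ZJ (idxIn d c n) \<and> v \<in> ZJ (idxIn d c n)"
proof -
  obtain a where a: "a \<ge> 1" "u \<in> ZJ (idxIn d c a)" using exists_n[OF assms(1)] by blast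
  obtain b where b: "b \<ge> 1" "v \<in> ZJ (idxIn d c b)" using exists_n[OF assms(2)] by blast
  have "u \<in> ZJ (idxIn d c (max a b))" using a ZJn_mono[of a "max a b"] by auto
  moreover have "v \<in> ZJ (idxIn d c (max a b))" using b ZJn_mono[of b "max a b"] by auto
  ultimately show ?thesis using a by (intro exI[of _ "max a b"]) auto
qed

lemma nonneg_restrict: "v \<in> ZJ_nonneg K \<Longrightarrow> v \<in> ZJ J \<Longrightarrow> v \<in> ZJ_nonneg J"
  unfolding ZJ_nonneg_def by auto

lemma fiber_restrict:
  assumes "v \<in> fiber (idxI d c) L u" "u \<in> ZJ (idxIn d c n)" "v \<in> ZJ (idxIn d c n)"
  shows "v \<in> fiber (idxIn d c n) (L \<inter> ZJ (idxIn d c n)) u"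
  using assms ZJ_diff[OF assms(2,3)] unfolding fiber_def by (auto intro: nonneg_restrict)

lemma fiber_sub: "fiber (idxIn d c n) (L \<inter> ZJ (idxIn d c n)) u \<subseteq> fiber (idxI d c) L u"
  unfolding fiber_def using ZJ_nonneg_mono[OF idxIn_sub] by blast

lemma gen_group_mono: "x \<in> gen_group A \<Longrightarrow> A \<subseteq> B \<Longrightarrow> x \<in> gen_group B"
  by (induction rule: gen_group.induct) (auto intro: gen_group.intros)

lemma gen_group_sub: assumes "is_lattice J L" "A \<subseteq> L" shows "x \<in> gen_group A \<Longrightarrow> x \<in> L"
proof (induction rule: gen_group.induct)
  case zero then show ?case using assms unfolding is_lattice_def by blast
next
  case (add x b) then show ?case using assms unfolding is_lattice_def by blast
next
  case (sub x b)
  then have "x + - b \<in> L" using assms unfolding is_lattice_def by blast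
  then show ?case by (metis diff_conv_add_uminus)
qed

lemma term_order_restrict: assumes "term_order K ord" "J \<subseteq> K" shows "term_order J ord"
proof -
  have S: "ZJ_nonneg J \<subseteq> ZJ_nonneg K" using ZJ_nonneg_mono[OF assms(2)] .
  have "{(u, v). u \<in> ZJ_nonneg J \<and> v \<in> ZJ_nonneg J \<and> ord u v} \<subseteq> {(u, v). u \<in> ZJ_nonneg K \<and> v \<in> ZJ_nonneg K \<and> ord u v}"
    using S by auto
  hence "wf {(u, v). u \<in> ZJ_nonneg J \<and> v \<in> ZJ_nonneg J \<and> ord u v}"
    using assms(1) wf_subset unfolding term_order_def by blast
  moreover have "ZJ_nonneg J \<subseteq> ZJ_nonneg K" using S .
  ultimately show ?thesis using assms(1) unfolding term_order_def
    by (meson subsetD)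
qed

lemma groebner_part:
  assumes L: "is_lattice (idxI d c) L"
    and H: "\<forall>n\<ge>1. B n \<subseteq> L \<inter> ZJ (idxIn d c n) \<and> groebner_basis (idxIn d c n) (L \<inter> ZJ (idxIn d c n)) ord (B n)"
  shows "groebner_basis (idxI d c) L ord (\<Union>n\<in>{1..}. B n)"
  unfolding groebner_basis_def
proof (intro conjI ballI impI)
  show "(\<Union>n\<in>{1..}. B n) \<subseteq> L" using H by auto
  fix u m assume u: "u \<in> ZJ_nonneg (idxI d c)" and m: "m \<in> fiber (idxI d c) L u"
    and mn: "\<forall>v\<in>fiber (idxI d c) L u. \<not> ord v m"
  have "u \<in> ZJ (idxI d c)" "m \<in> ZJ (idxI d c)" using u m unfolding fiber_def ZJ_nonneg_def by auto
  then obtain n where n: "n \<ge> 1" "u \<in> ZJ (idxIn d c n)" "m \<in> ZJ (idxIn d c n)"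
    using exists_n2 by blast
  let ?Ln = "L \<inter> ZJ (idxIn d c n)"
  have u': "u \<in> ZJ_nonneg (idxIn d c n)" using nonneg_restrict[OF u n(2)] .
  have m': "m \<in> fiber (idxIn d c n) ?Ln u" using fiber_restrict[OF m n(2,3)] .
  have mn': "\<forall>v\<in>fiber (idxIn d c n) ?Ln u. \<not> ord v m" using mn fiber_sub by blast
  have "(u, m) \<in> {(x, y). x \<in> fiber (idxIn d c n) ?Ln u \<and> y \<in> fiber (idxIn d c n) ?Ln u \<and> (x - y \<in> B n \<or> y - x \<in> B n) \<and> ord y x}\<^sup>*"
    using H n(1) u' m' mn' unfolding groebner_basis_def by blast
  moreover have "{(x, y). x \<in> fiber (idxIn d c n) ?Ln u \<and> y \<in> fiber (idxIn d c n) ?Ln u \<and> (x - y \<in> B n \<or> y - x \<in> B n) \<and> ord y x}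
     \<subseteq> {(x, y). x \<in> fiber (idxI d c) L u \<and> y \<in> fiber (idxI d c) L u \<and> (x - y \<in> (\<Union>n\<in>{1..}. B n) \<or> y - x \<in> (\<Union>n\<in>{1..}. B n)) \<and> ord y x}"
    using fiber_sub n(1) by fastforce
  ultimately show "(u, m) \<in> {(x, y). x \<in> fiber (idxI d c) L u \<and> y \<in> fiber (idxI d c) L u \<and> (x - y \<in> (\<Union>n\<in>{1..}. B n) \<or> y - x \<in> (\<Union>n\<in>{1..}. B n)) \<and> ord y x}\<^sup>*"
    using rtrancl_mono by blast
qed

lemma markov_part:
  assumes L: "is_lattice (idxI d c) L"
    and H: "\<forall>n\<ge>1. B n \<subseteq> L \<inter> ZJ (idxIn d c n) \<and> markov_basis (idxIn d c n) (L \<inter> ZJ (idxIn d c n)) (B n)"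
  shows "markov_basis (idxI d c) L (\<Union>n\<in>{1..}. B n)"
  unfolding markov_basis_def
proof (intro conjI ballI)
  show "(\<Union>n\<in>{1..}. B n) \<subseteq> L" using H by auto
  fix u v w assume u: "u \<in> ZJ_nonneg (idxI d c)" and v: "v \<in> fiber (idxI d c) L u"
    and w: "w \<in> fiber (idxI d c) L u"
  have "u \<in> ZJ (idxI d c)" "v \<in> ZJ (idxI d c)" "w \<in> ZJ (idxI d c)"
    using u v w unfolding fiber_def ZJ_nonneg_def by auto
  then obtain a where a: "a \<ge> 1" "u \<in> ZJ (idxIn d c a)" "v \<in> ZJ (idxIn d c a)"
    using exists_n2 by blast
  obtain b where b: "b \<ge> 1" "w \<in> ZJ (idxIn d c b)"
    using exists_n \<open>w \<in> ZJ (idxI d c)\<close> by blast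
  define n where "n = max a b"
  have n: "n \<ge> 1" "u \<in> ZJ (idxIn d c n)" "v \<in> ZJ (idxIn d c n)" "w \<in> ZJ (idxIn d c n)"
    using a b ZJn_mono[of a n d c] ZJn_mono[of b n d c] unfolding n_def by auto
  let ?Ln = "L \<inter> ZJ (idxIn d c n)"
  have u': "u \<in> ZJ_nonneg (idxIn d c n)" using nonneg_restrict[OF u n(2)] .
  have v': "v \<in> fiber (idxIn d c n) ?Ln u" using fiber_restrict[OF v n(2,3)] .
  have w': "w \<in> fiber (idxIn d c n) ?Ln u" using fiber_restrict[OF w n(2,4)] .
  have "(v, w) \<in> {(x, y). x \<in> fiber (idxIn d c n) ?Ln u \<and> y \<in> fiber (idxIn d c n) ?Ln u \<and> (x - y \<in> B n \<or> y - x \<in> B n)}\<^sup>*"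
    using H n(1) u' v' w' unfolding markov_basis_def by blast
  moreover have "{(x, y). x \<in> fiber (idxIn d c n) ?Ln u \<and> y \<in> fiber (idxIn d c n) ?Ln u \<and> (x - y \<in> B n \<or> y - x \<in> B n)}
     \<subseteq> {(x, y). x \<in> fiber (idxI d c) L u \<and> y \<in> fiber (idxI d c) L u \<and> (x - y \<in> (\<Union>n\<in>{1..}. B n) \<or> y - x \<in> (\<Union>n\<in>{1..}. B n))}"
    using fiber_sub n(1) by fastforce
  ultimately show "(v, w) \<in> {(x, y). x \<in> fiber (idxI d c) L u \<and> y \<in> fiber (idxI d c) L u \<and> (x - y \<in> (\<Union>n\<in>{1..}. B n) \<or> y - x \<in> (\<Union>n\<in>{1..}. B n))}\<^sup>*"
    using rtrancl_mono by blast
qed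

lemma conformal_supp: "conformal h g \<Longrightarrow> supp h \<subseteq> supp g"
  unfolding conformal_def supp_def by (auto, metis abs_0 abs_le_zero_iff)

lemma graver_restrict: "graver_basis L \<inter> ZJ (idxIn d c n) = graver_basis (L \<inter> ZJ (idxIn d c n))"
proof
  show "graver_basis L \<inter> ZJ (idxIn d c n) \<subseteq> graver_basis (L \<inter> ZJ (idxIn d c n))"
    unfolding graver_basis_def by auto
  show "graver_basis (L \<inter> ZJ (idxIn d c n)) \<subseteq> graver_basis L \<inter> ZJ (idxIn d c n)"
  proof
    fix g assume g: "g \<in> graver_basis (L \<inter> ZJ (idxIn d c n))"
    have "\<forall>h\<in>L. h \<noteq> 0 \<longrightarrow> conformal h g \<longrightarrow> h = g"
    proof (intro ballI impI)
      fix h assume h: "h \<in> L" "h \<noteq> 0" "conformal h g"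
      have "h \<in> ZJ (idxIn d c n)" using g conformal_supp[OF h(3)]
        unfolding graver_basis_def ZJ_def by (auto dest: finite_subset)
      thus "h = g" using g h unfolding graver_basis_def by auto
    qed
    thus "g \<in> graver_basis L \<inter> ZJ (idxIn d c n)" using g unfolding graver_basis_def by auto
  qed
qed

theorem proposition2p7:
  fixes c d :: nat and L :: "(nat list \<times> nat \<Rightarrow> int) set"
  assumes "1 \<le> c" and "1 \<le> d"
    and "is_lattice (idxI d c) L"
  shows
   "(\<forall>B :: nat \<Rightarrow> (nat list \<times> nat \<Rightarrow> int) set.
       (\<forall>n\<ge>1. B n \<subseteq> L \<inter> ZJ (idxIn d c n) \<and> generating_set (L \<inter> ZJ (idxIn d c n)) (B n))
       \<longrightarrow> generating_set L (\<Union>n\<in>{1..}. B n)) \<and>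
    (\<forall>B :: nat \<Rightarrow> (nat list \<times> nat \<Rightarrow> int) set.
       (\<forall>n\<ge>1. B n \<subseteq> L \<inter> ZJ (idxIn d c n) \<and> markov_basis (idxIn d c n) (L \<inter> ZJ (idxIn d c n)) (B n))
       \<longrightarrow> markov_basis (idxI d c) L (\<Union>n\<in>{1..}. B n)) \<and>
    (\<forall>B :: nat \<Rightarrow> (nat list \<times> nat \<Rightarrow> int) set.
       (\<forall>n\<ge>1. B n \<subseteq> L \<inter> ZJ (idxIn d c n) \<and> universal_groebner_basis (idxIn d c n) (L \<inter> ZJ (idxIn d c n)) (B n))
       \<longrightarrow> universal_groebner_basis (idxI d c) L (\<Union>n\<in>{1..}. B n)) \<and>
    (\<forall>B :: nat \<Rightarrow> (nat list \<times> nat \<Rightarrow> int) set.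
       (\<forall>n\<ge>1. B n \<subseteq> L \<inter> ZJ (idxIn d c n) \<and> B n = graver_basis (L \<inter> ZJ (idxIn d c n)))
       \<longrightarrow> (\<Union>n\<in>{1..}. B n) = graver_basis L) \<and>
    (\<forall>ord B. term_order (idxI d c) ord \<longrightarrow>
       (\<forall>n\<ge>1. B n \<subseteq> L \<inter> ZJ (idxIn d c n) \<and> groebner_basis (idxIn d c n) (L \<inter> ZJ (idxIn d c n)) ord (B n))
       \<longrightarrow> groebner_basis (idxI d c) L ord (\<Union>n\<in>{1..}. B n)) \<and>
    (\<forall>n\<ge>1. graver_basis L \<inter> ZJ (idxIn d c n) = graver_basis (L \<inter> ZJ (idxIn d c n)))"
proof (intro conjI allI impI)
  note Lat = assms(3)
  fix B :: "nat \<Rightarrow> (nat list \<times> nat \<Rightarrow> int) set"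
  assume H: "\<forall>n\<ge>1. B n \<subseteq> L \<inter> ZJ (idxIn d c n) \<and> generating_set (L \<inter> ZJ (idxIn d c n)) (B n)"
  have sub: "(\<Union>n\<in>{1..}. B n) \<subseteq> L" using H by auto
  have "gen_group (\<Union>n\<in>{1..}. B n) = L"
  proof
    show "gen_group (\<Union>n\<in>{1..}. B n) \<subseteq> L" using gen_group_sub[OF Lat sub] by blast
    show "L \<subseteq> gen_group (\<Union>n\<in>{1..}. B n)"
    proof
      fix x assume x: "x \<in> L"
      then have "x \<in> ZJ (idxI d c)" using Lat unfolding is_lattice_def by auto
      then obtain n where n: "n \<ge> 1" "x \<in> ZJ (idxIn d c n)" using exists_n by blast
      then have "x \<in> gen_group (B n)" using H x unfolding generating_set_def by auto
      thus "x \<in> gen_group (\<Union>n\<in>{1..}. B n)" using gen_group_mono n(1) by blast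
    qed
  qed
  thus "generating_set L (\<Union>n\<in>{1..}. B n)" using sub unfolding generating_set_def by auto
next
  fix B :: "nat \<Rightarrow> (nat list \<times> nat \<Rightarrow> int) set"
  assume "\<forall>n\<ge>1. B n \<subseteq> L \<inter> ZJ (idxIn d c n) \<and> markov_basis (idxIn d c n) (L \<inter> ZJ (idxIn d c n)) (B n)"
  thus "markov_basis (idxI d c) L (\<Union>n\<in>{1..}. B n)" using markov_part assms(3) by blast
next
  fix B :: "nat \<Rightarrow> (nat list \<times> nat \<Rightarrow> int) set"
  assume H: "\<forall>n\<ge>1. B n \<subseteq> L \<inter> ZJ (idxIn d c n) \<and> universal_groebner_basis (idxIn d c n) (L \<inter> ZJ (idxIn d c n)) (B n)"
  show "universal_groebner_basis (idxI d c) L (\<Union>n\<in>{1..}. B n)"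
    unfolding universal_groebner_basis_def
  proof (intro allI impI)
    fix ord assume t: "term_order (idxI d c) ord"
    have "\<forall>n\<ge>1. B n \<subseteq> L \<inter> ZJ (idxIn d c n) \<and> groebner_basis (idxIn d c n) (L \<inter> ZJ (idxIn d c n)) ord (B n)"
      using H term_order_restrict[OF t idxIn_sub] unfolding universal_groebner_basis_def by blast
    thus "groebner_basis (idxI d c) L ord (\<Union>n\<in>{1..}. B n)" using groebner_part assms(3) by blast
  qed
next
  fix B :: "nat \<Rightarrow> (nat list \<times> nat \<Rightarrow> int) set"
  assume H: "\<forall>n\<ge>1. B n \<subseteq> L \<inter> ZJ (idxIn d c n) \<and> B n = graver_basis (L \<inter> ZJ (idxIn d c n))"
  have "\<forall>n\<ge>1. B n = graver_basis L \<inter> ZJ (idxIn d c n)" using H graver_restrict by metis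
  moreover have "graver_basis L \<subseteq> (\<Union>n\<in>{1..}. graver_basis L \<inter> ZJ (idxIn d c n))"
  proof
    fix g assume g: "g \<in> graver_basis L"
    then have "g \<in> ZJ (idxI d c)" using assms(3) unfolding graver_basis_def is_lattice_def by auto
    then obtain n where "n \<ge> 1" "g \<in> ZJ (idxIn d c n)" using exists_n by blast
    thus "g \<in> (\<Union>n\<in>{1..}. graver_basis L \<inter> ZJ (idxIn d c n))" using g by auto
  qed
  ultimately show "(\<Union>n\<in>{1..}. B n) = graver_basis L" by auto
next
  fix ord and B :: "nat \<Rightarrow> (nat list \<times> nat \<Rightarrow> int) set"
  assume "\<forall>n\<ge>1. B n \<subseteq> L \<inter> ZJ (idxIn d c n) \<and> groebner_basis (idxIn d c n) (L \<inter> ZJ (idxIn d c n)) ord (B n)"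
  thus "groebner_basis (idxI d c) L ord (\<Union>n\<in>{1..}. B n)" using groebner_part assms(3) by blast
next
  fix n :: nat
  show "graver_basis L \<inter> ZJ (idxIn d c n) = graver_basis (L \<inter> ZJ (idxIn d c n))"
    by (rule graver_restrict)
qed

end
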